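(* Let $V_1,V_2$ be irreducible $R$-modules having the same infinitesimal character (i.e., there is an algebra homomorphism $\xi:Z(R)\to\mathbb{C}$ such that each $z\in Z(R)$ acts on both $V_1$ and $V_2$ by the scalar $\xi(z)$). If $V_1$ and $V_2$ each contain a nonzero Whittaker vector of type $\eta$, then in each $V_i$ the Whittaker vectors of type $\eta$ are unique up to scalar multiples, and $V_1\cong V_2$ as $R$-modules.
   Context: Let $f\in\mathbb{C}[H]$ be a polynomial. $R=R(f)$ is the associative $\mathbb{C}$-algebra generated by $E,F,H$ with relations $EF-FE=f(H)$, $HE-EH=E$, $HF-FH=-F$. Let $R(E)=\mathbb{C}[E]$; $Z(R)$ is the center of $R$. Fix an algebra homomorphism $\eta:R(E)\to\mathbb{C}$ with $\eta(E)\neq 0$. A vector $w$ of an $R$-module is a Whittaker vector of type $\eta$ if $Ew=\eta(E)w$. *)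

theory Defs
  imports "HOL-Computational_Algebra.Polynomial"
begin

text \<open>Formal noncommutative expressions over C in the generators E, F, H
  (elements of the free associative C-algebra before quotienting).\<close>
datatype rexpr = RE | RF | RH | RConst complex | RAdd rexpr rexpr | RMul rexpr rexpr

fun rpow :: "rexpr \<Rightarrow> nat \<Rightarrow> rexpr" where
  "rpow x 0 = RConst 1"
| "rpow x (Suc n) = RMul x (rpow x n)"

definition rpolyH :: "complex poly \<Rightarrow> rexpr" where
  "rpolyH p = foldr (\<lambda>i acc. RAdd (RMul (RConst (coeff p i)) (rpow RH i)) acc)
                    [0..<Suc (degree p)] (RConst 0)"

definition rsub :: "rexpr \<Rightarrow> rexpr \<Rightarrow> rexpr" where
  "rsub x y = RAdd x (RMul (RConst (-1)) y)"

text \<open>Equality in R = R(f): the smallest congruence containing the axioms of an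
  associative C-algebra (scalars central) and the defining relations.\<close>
inductive req :: "complex poly \<Rightarrow> rexpr \<Rightarrow> rexpr \<Rightarrow> bool" for fp where
  refl: "req fp x x"
| sym: "req fp x y \<Longrightarrow> req fp y x"
| trans: "req fp x y \<Longrightarrow> req fp y z \<Longrightarrow> req fp x z"
| cong_add: "req fp a a' \<Longrightarrow> req fp b b' \<Longrightarrow> req fp (RAdd a b) (RAdd a' b')"
| cong_mul: "req fp a a' \<Longrightarrow> req fp b b' \<Longrightarrow> req fp (RMul a b) (RMul a' b')"
| add_assoc: "req fp (RAdd (RAdd x y) z) (RAdd x (RAdd y z))"
| add_comm: "req fp (RAdd x y) (RAdd y x)"
| add_zero: "req fp (RAdd x (RConst 0)) x"
| add_neg: "req fp (RAdd x (RMul (RConst (-1)) x)) (RConst 0)"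
| mul_assoc: "req fp (RMul (RMul x y) z) (RMul x (RMul y z))"
| mul_one_l: "req fp (RMul (RConst 1) x) x"
| mul_one_r: "req fp (RMul x (RConst 1)) x"
| distrib_l: "req fp (RMul x (RAdd y z)) (RAdd (RMul x y) (RMul x z))"
| distrib_r: "req fp (RMul (RAdd x y) z) (RAdd (RMul x z) (RMul y z))"
| const_add: "req fp (RConst (a + b)) (RAdd (RConst a) (RConst b))"
| const_mul: "req fp (RConst (a * b)) (RMul (RConst a) (RConst b))"
| const_comm: "req fp (RMul (RConst c) x) (RMul x (RConst c))"
| rel_EF: "req fp (rsub (RMul RE RF) (RMul RF RE)) (rpolyH fp)"
| rel_HE: "req fp (rsub (RMul RH RE) (RMul RE RH)) RE"
| rel_HF: "req fp (rsub (RMul RH RF) (RMul RF RH)) (RMul (RConst (-1)) RF)"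

definition central :: "complex poly \<Rightarrow> rexpr \<Rightarrow> bool" where
  "central fp z \<longleftrightarrow> (\<forall>x. req fp (RMul z x) (RMul x z))"

text \<open>An algebra homomorphism xi : Z(R) \<rightarrow> C, given on representatives.\<close>
definition center_char :: "complex poly \<Rightarrow> (rexpr \<Rightarrow> complex) \<Rightarrow> bool" where
  "center_char fp \<xi> \<longleftrightarrow>
     (\<forall>z z'. central fp z \<and> req fp z z' \<longrightarrow> \<xi> z = \<xi> z') \<and>
     \<xi> (RConst 1) = 1 \<and>
     (\<forall>z z'. central fp z \<and> central fp z' \<longrightarrow>
        \<xi> (RAdd z z') = \<xi> z + \<xi> z' \<and> \<xi> (RMul z z') = \<xi> z * \<xi> z') \<and>
     (\<forall>c z. central fp z \<longrightarrow> \<xi> (RMul (RConst c) z) = c * \<xi> z)"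

text \<open>An R-module: a complex vector space (type 'v with scalar multiplication s)
  with linear operators e, f, h (actions of E, F, H) satisfying the relations.\<close>

definition polyop :: "(complex \<Rightarrow> 'v \<Rightarrow> 'v) \<Rightarrow> complex poly \<Rightarrow> ('v \<Rightarrow> 'v) \<Rightarrow> 'v \<Rightarrow> 'v::ab_group_add" where
  "polyop s p A v = (\<Sum>i\<le>degree p. s (coeff p i) ((A ^^ i) v))"

definition rmodule :: "complex poly \<Rightarrow> (complex \<Rightarrow> 'v \<Rightarrow> 'v::ab_group_add)
    \<Rightarrow> ('v \<Rightarrow> 'v) \<Rightarrow> ('v \<Rightarrow> 'v) \<Rightarrow> ('v \<Rightarrow> 'v) \<Rightarrow> bool" where
  "rmodule fp s e f h \<longleftrightarrow> vector_space s \<and>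
     Vector_Spaces.linear s s e \<and> Vector_Spaces.linear s s f \<and> Vector_Spaces.linear s s h \<and>
     (\<forall>v. e (f v) - f (e v) = polyop s fp h v) \<and>
     (\<forall>v. h (e v) - e (h v) = e v) \<and>
     (\<forall>v. h (f v) - f (h v) = - f v)"

fun ract :: "(complex \<Rightarrow> 'v \<Rightarrow> 'v) \<Rightarrow> ('v \<Rightarrow> 'v) \<Rightarrow> ('v \<Rightarrow> 'v) \<Rightarrow> ('v \<Rightarrow> 'v)
    \<Rightarrow> rexpr \<Rightarrow> 'v \<Rightarrow> 'v::ab_group_add" where
  "ract s e f h RE v = e v"
| "ract s e f h RF v = f v"
| "ract s e f h RH v = h v"
| "ract s e f h (RConst c) v = s c v"
| "ract s e f h (RAdd x y) v = ract s e f h x v + ract s e f h y v"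
| "ract s e f h (RMul x y) v = ract s e f h x (ract s e f h y v)"

definition irreducible_rmodule :: "complex poly \<Rightarrow> (complex \<Rightarrow> 'v \<Rightarrow> 'v::ab_group_add)
    \<Rightarrow> ('v \<Rightarrow> 'v) \<Rightarrow> ('v \<Rightarrow> 'v) \<Rightarrow> ('v \<Rightarrow> 'v) \<Rightarrow> bool" where
  "irreducible_rmodule fp s e f h \<longleftrightarrow> rmodule fp s e f h \<and> (\<exists>v. v \<noteq> (0::'v)) \<and>
     (\<forall>W. module.subspace s W \<and> e ` W \<subseteq> W \<and> f ` W \<subseteq> W \<and> h ` W \<subseteq> W
          \<longrightarrow> W = {0} \<or> W = UNIV)"

text \<open>Whittaker vector of type eta, where a = eta(E).\<close>
definition whittaker :: "complex \<Rightarrow> (complex \<Rightarrow> 'v \<Rightarrow> 'v) \<Rightarrow> ('v \<Rightarrow> 'v) \<Rightarrow> 'v \<Rightarrow> bool" where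
  "whittaker a s e w \<longleftrightarrow> e w = s a w"

definition rmodule_iso :: "(complex \<Rightarrow> 'v \<Rightarrow> 'v::ab_group_add) \<Rightarrow> ('v \<Rightarrow> 'v) \<Rightarrow> ('v \<Rightarrow> 'v) \<Rightarrow> ('v \<Rightarrow> 'v)
    \<Rightarrow> (complex \<Rightarrow> 'w \<Rightarrow> 'w::ab_group_add) \<Rightarrow> ('w \<Rightarrow> 'w) \<Rightarrow> ('w \<Rightarrow> 'w) \<Rightarrow> ('w \<Rightarrow> 'w)
    \<Rightarrow> ('v \<Rightarrow> 'w) \<Rightarrow> bool" where
  "rmodule_iso s1 e1 f1 h1 s2 e2 f2 h2 \<phi> \<longleftrightarrow>
     Vector_Spaces.linear s1 s2 \<phi> \<and> bij \<phi> \<and>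
     (\<forall>v. \<phi> (e1 v) = e2 (\<phi> v) \<and> \<phi> (f1 v) = f2 (\<phi> v) \<and> \<phi> (h1 v) = h2 (\<phi> v))"

end

theory Submission
  imports Defs
begin


definition reqall :: "rexpr \<Rightarrow> rexpr \<Rightarrow> bool" where
  "reqall x y \<longleftrightarrow> (\<forall>p. req p x y)"

lemma reqall_equivp: "equivp reqall"
  unfolding reqall_def
  by (auto intro!: equivpI reflpI sympI transpI intro: req.refl req.sym req.trans)

quotient_type ralg = rexpr / reqall
  by (rule reqall_equivp)

instantiation ralg :: "{ring, monoid_mult}"
begin

lift_definition zero_ralg :: ralg is "RConst 0" .
lift_definition one_ralg :: ralg is "RConst 1" .
lift_definition plus_ralg :: "ralg \<Rightarrow> ralg \<Rightarrow> ralg" is RAdd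
  unfolding reqall_def by (auto intro: req.cong_add)
lift_definition times_ralg :: "ralg \<Rightarrow> ralg \<Rightarrow> ralg" is RMul
  unfolding reqall_def by (auto intro: req.cong_mul)
lift_definition uminus_ralg :: "ralg \<Rightarrow> ralg" is "\<lambda>x. RMul (RConst (-1)) x"
  unfolding reqall_def by (auto intro: req.cong_mul req.refl)
lift_definition minus_ralg :: "ralg \<Rightarrow> ralg \<Rightarrow> ralg" is rsub
  unfolding reqall_def rsub_def by (auto intro: req.cong_mul req.cong_add req.refl)

instance
proof
  fix a b c :: ralg
  show "a + b + c = a + (b + c)"
    by transfer (auto simp: reqall_def intro: req.add_assoc)
  show "a + b = b + a"
    by transfer (auto simp: reqall_def intro: req.add_comm)
  show "0 + a = a"
    by transfer (auto simp: reqall_def intro: req.add_comm req.add_zero req.trans)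
  show "- a + a = 0"
    by transfer (auto simp: reqall_def intro: req.add_comm req.add_neg req.trans)
  show "a - b = a + - b"
    by transfer (auto simp: reqall_def rsub_def intro: req.refl)
  show "a * b * c = a * (b * c)"
    by transfer (auto simp: reqall_def intro: req.mul_assoc)
  show "(a + b) * c = a * c + b * c"
    by transfer (auto simp: reqall_def intro: req.distrib_r)
  show "a * (b + c) = a * b + a * c"
    by transfer (auto simp: reqall_def intro: req.distrib_l)
  show "1 * a = a"
    by transfer (auto simp: reqall_def intro: req.mul_one_l)
  show "a * 1 = a"
    by transfer (auto simp: reqall_def intro: req.mul_one_r)
qed
end

lift_definition cst :: "complex \<Rightarrow> ralg" is RConst .
lift_definition gE :: ralg is RE .
lift_definition gF :: ralg is RF .
lift_definition gH :: ralg is RH .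

lemma cst_add: "cst (a + b) = cst a + cst b"
  by transfer (auto simp: reqall_def intro: req.const_add)
lemma cst_mult: "cst (a * b) = cst a * cst b"
  by transfer (auto simp: reqall_def intro: req.const_mul)
lemma cst_comm: "cst c * x = x * cst c"
  by transfer (auto simp: reqall_def intro: req.const_comm)
lemma cst_0: "cst 0 = 0"
  by transfer (auto simp: reqall_def intro: req.refl)
lemma cst_1: "cst 1 = 1"
  by transfer (auto simp: reqall_def intro: req.refl)
lemma rel_HE_A: "gH * gE - gE * gH = gE"
  by transfer (auto simp: reqall_def intro: req.rel_HE)
lemma rel_HF_A: "gH * gF - gF * gH = - gF"
  by transfer (auto simp: reqall_def intro: req.rel_HF)

lemma abs_eq_req: "abs_ralg x = abs_ralg y \<Longrightarrow> req fp x y"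
  by (simp add: ralg.abs_eq_iff reqall_def)



lemma abs_RAdd: "abs_ralg (RAdd x y) = abs_ralg x + abs_ralg y"
  by (simp add: plus_ralg.abs_eq)
lemma abs_RMul: "abs_ralg (RMul x y) = abs_ralg x * abs_ralg y"
  by (simp add: times_ralg.abs_eq)
lemma abs_RConst: "abs_ralg (RConst c) = cst c"
  by (simp add: cst.abs_eq)
lemma abs_RE: "abs_ralg RE = gE" by (simp add: gE.abs_eq)
lemma abs_RF: "abs_ralg RF = gF" by (simp add: gF.abs_eq)
lemma abs_RH: "abs_ralg RH = gH" by (simp add: gH.abs_eq)
lemma abs_rsub: "abs_ralg (rsub x y) = abs_ralg x - abs_ralg y"
  by (simp add: minus_ralg.abs_eq)

lemmas abs_simps = abs_RAdd abs_RMul abs_RConst abs_RE abs_RF abs_RH abs_rsub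

lemma abs_rpow: "abs_ralg (rpow x n) = abs_ralg x ^ n"
  by (induction n) (simp_all add: abs_simps cst_1)

definition Hp :: "complex poly \<Rightarrow> ralg" where
  "Hp q = abs_ralg (rpolyH q)"

lemma abs_foldr:
  "abs_ralg (foldr (\<lambda>i acc. RAdd (RMul (RConst (c i)) (rpow RH i)) acc) xs z)
    = (\<Sum>i\<leftarrow>xs. cst (c i) * gH ^ i) + abs_ralg z"
  by (induction xs) (simp_all add: abs_simps abs_rpow add.assoc)

lemma Hp_sum: "Hp q = (\<Sum>i<Suc (degree q). cst (coeff q i) * gH ^ i)"
proof -
  have "Hp q = (\<Sum>i\<leftarrow>[0..<Suc (degree q)]. cst (coeff q i) * gH ^ i)"
    unfolding Hp_def rpolyH_def abs_foldr by (simp add: abs_simps cst_0)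
  also have "\<dots> = (\<Sum>i<Suc (degree q). cst (coeff q i) * gH ^ i)"
    by (simp add: sum_list_distinct_conv_sum_set atLeast0LessThan)
  finally show ?thesis .
qed

lemma Hp_sumN:
  assumes "degree q < N"
  shows "Hp q = (\<Sum>i<N. cst (coeff q i) * gH ^ i)"
proof -
  have "(\<Sum>i<N. cst (coeff q i) * gH ^ i) = (\<Sum>i<Suc (degree q). cst (coeff q i) * gH ^ i)"
  proof (rule sum.mono_neutral_right)
    show "\<forall>i\<in>{..<N} - {..<Suc (degree q)}. cst (coeff q i) * gH ^ i = 0"
      by (auto simp: coeff_eq_0 cst_0)
  qed (use assms in auto)
  then show ?thesis by (simp add: Hp_sum)
qed

lemma cst_comm_pow: "cst c * gH ^ i = gH ^ i * cst c"
  by (rule cst_comm)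

lemma Hp_pCons: "Hp (pCons c q) = cst c + gH * Hp q"
proof -
  have d: "degree (pCons c q) < Suc (Suc (degree q))"
    using degree_pCons_le[of c q] by simp
  have "Hp (pCons c q) = (\<Sum>i<Suc (Suc (degree q)). cst (coeff (pCons c q) i) * gH ^ i)"
    by (rule Hp_sumN[OF d])
  also have "\<dots> = cst c + (\<Sum>i<Suc (degree q). cst (coeff q i) * gH ^ Suc i)"
    by (subst sum.lessThan_Suc_shift) simp
  also have "(\<Sum>i<Suc (degree q). cst (coeff q i) * gH ^ Suc i) = gH * Hp q"
    unfolding Hp_sum sum_distrib_left
  proof (rule sum.cong[OF HOL.refl])
    fix i
    show "cst (coeff q i) * gH ^ Suc i = gH * (cst (coeff q i) * gH ^ i)"
      by (metis cst_comm mult.assoc power_Suc)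
  qed
  finally show ?thesis .
qed

lemma Hp_0[simp]: "Hp 0 = 0"
  by (simp add: Hp_sum cst_0)

lemma Hp_const: "Hp [:c:] = cst c"
  by (simp add: Hp_pCons Hp_0)

lemma Hp_add: "Hp (p + q) = Hp p + Hp q"
proof (induction p arbitrary: q)
  case 0 then show ?case by (simp add: Hp_0)
next
  case (pCons a p)
  show ?case
  proof (cases q)
    case (pCons b q')
    then show ?thesis using pCons.IH[of q']
      by (simp add: Hp_pCons cst_add distrib_left add_ac)
  qed
qed

lemma cst_Hp_comm: "cst c * Hp p = Hp p * cst c"
  by (rule cst_comm)

lemma Hp_smult: "Hp (smult c p) = cst c * Hp p"
proof (induction p)
  case 0 then show ?case by (simp add: Hp_0)
next
  case (pCons a p)
  have "cst c * (gH * Hp p) = gH * (cst c * Hp p)"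
    by (metis cst_comm mult.assoc)
  then show ?case using pCons.IH
    by (simp add: Hp_pCons cst_mult distrib_left)
qed

lemma Hp_minus: "Hp (- p) = - Hp p"
  using Hp_add[of p "-p"] by (simp add: eq_neg_iff_add_eq_0 add.commute)

lemma Hp_diff: "Hp (p - q) = Hp p - Hp q"
  using Hp_add[of p "-q"] by (simp add: Hp_minus)

lemma Hp_mult: "Hp (p * q) = Hp p * Hp q"
proof (induction p)
  case 0 then show ?case by (simp add: Hp_0)
next
  case (pCons a p)
  have "Hp (pCons a p * q) = Hp (smult a q + pCons 0 (p * q))"
    by simp
  also have "\<dots> = cst a * Hp q + gH * (Hp p * Hp q)"
    using pCons.IH by (simp add: Hp_add Hp_smult Hp_pCons cst_0)
  also have "\<dots> = Hp (pCons a p) * Hp q"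
    by (simp add: Hp_pCons distrib_right mult.assoc)
  finally show ?case .
qed

lemma Hp_X: "Hp [:0,1:] = gH"
  by (simp add: Hp_pCons Hp_const cst_0 cst_1)

lemma Hp_comm: "Hp p * Hp q = Hp q * Hp p"
  by (simp add: Hp_mult[symmetric] mult.commute)

lemma Hp_H_comm: "Hp p * gH = gH * Hp p"
  using Hp_comm[of p "[:0,1:]"] by (simp add: Hp_X)

lemma HE: "gH * gE = gE * (gH + 1)"
  using rel_HE_A by (simp add: algebra_simps)

lemma HF: "gH * gF = gF * (gH - 1)"
  using rel_HF_A by (simp add: algebra_simps)

lemma Hp_shiftE: "Hp p * gE = gE * Hp (pcompose p [:1,1:])"
proof (induction p)
  case 0 then show ?case by (simp add: Hp_0)
next
  case (pCons a p)
  have h11: "Hp [:1,1:] = gH + 1"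
    by (simp add: Hp_pCons Hp_const cst_1 add.commute)
  have "Hp (pCons a p) * gE = cst a * gE + gH * (gE * Hp (pcompose p [:1,1:]))"
    using pCons.IH by (simp add: Hp_pCons distrib_right mult.assoc)
  also have "\<dots> = gE * cst a + gE * ((gH + 1) * Hp (pcompose p [:1,1:]))"
    by (simp add: cst_comm mult.assoc[symmetric] HE)
  also have "\<dots> = gE * Hp (pcompose (pCons a p) [:1,1:])"
    by (simp only: pcompose_pCons Hp_add Hp_mult Hp_const h11 distrib_left)
  finally show ?case .
qed

lemma Hp_shiftF: "Hp p * gF = gF * Hp (pcompose p [:-1,1:])"
proof (induction p)
  case 0 then show ?case by (simp add: Hp_0)
next
  case (pCons a p)
  have h11: "Hp [:-1,1:] = gH - 1"
  proof -
    have "cst (-1) = - 1"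
      using cst_add[of 1 "-1"] by (simp add: cst_0 cst_1 eq_neg_iff_add_eq_0 add.commute)
    then show ?thesis by (simp add: Hp_pCons Hp_const cst_1)
  qed
  have "Hp (pCons a p) * gF = cst a * gF + gH * (gF * Hp (pcompose p [:-1,1:]))"
    using pCons.IH by (simp add: Hp_pCons distrib_right mult.assoc)
  also have "\<dots> = gF * cst a + gF * ((gH - 1) * Hp (pcompose p [:-1,1:]))"
    by (simp add: cst_comm mult.assoc[symmetric] HF)
  also have "\<dots> = gF * Hp (pcompose (pCons a p) [:-1,1:])"
    by (simp only: pcompose_pCons Hp_add Hp_mult Hp_const h11 distrib_left)
  finally show ?case .
qed



lemma pcompose_power: "pcompose (p ^ n) q = (pcompose p q) ^ n"
  by (induction n) (simp_all add: pcompose_mult one_pCons del: pCons_one)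

lemma pcompose_X: "pcompose [:0,1:] (q::complex poly) = q"
  by (simp add: pcompose_pCons)

lemma coeffD:
  fixes n k :: nat
  shows "coeff (([:1,1:]::complex poly) ^ Suc n - [:0,1:] ^ Suc n) k
     = (if k \<le> n then of_nat (Suc n choose k) else 0)"
proof (cases "k \<le> Suc n")
  case True
  have a: "coeff (([:1,1:]::complex poly) ^ Suc n) k = of_nat (Suc n choose k)"
    using coeff_linear_poly_power[OF True, of "1::complex" 1] by simp
  have b: "coeff (([:0,1:]::complex poly) ^ Suc n) k = (if k = Suc n then 1 else 0)"
    using coeff_linear_poly_power[OF True, of "0::complex" 1] True by simp
  show ?thesis
  proof (cases "k \<le> n")
    case True then show ?thesis unfolding coeff_diff a b by simp
  next
    case False
    then have "k = Suc n" using \<open>k \<le> Suc n\<close> by simp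
    then show ?thesis unfolding coeff_diff a b using False by simp
  qed
next
  case False
  have d1: "degree (([:1,1:]::complex poly) ^ Suc n) \<le> Suc n"
    using degree_power_le[of "[:1,1:]::complex poly" "Suc n"] by simp
  have d2: "degree (([:0,1:]::complex poly) ^ Suc n) \<le> Suc n"
    using degree_power_le[of "[:0,1:]::complex poly" "Suc n"] by simp
  have "coeff (([:1,1:]::complex poly) ^ Suc n) k = 0"
    by (rule coeff_eq_0) (use d1 False in linarith)
  moreover have "coeff (([:0,1:]::complex poly) ^ Suc n) k = 0"
    by (rule coeff_eq_0) (use d2 False in linarith)
  ultimately show ?thesis using False unfolding coeff_diff by simp
qed

lemma diff_exists: "\<exists>u::complex poly. pcompose u [:1,1:] - u = g"
proof (induction "degree g" arbitrary: g rule: less_induct)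
  case less
  show ?case
  proof (cases "g = 0")
    case True then show ?thesis by (intro exI[of _ 0]) simp
  next
    case False
    define n where "n = degree g"
    define c where "c = lead_coeff g / of_nat (Suc n)"
    define D where "D = ([:1,1:]::complex poly) ^ Suc n - [:0,1:] ^ Suc n"
    define v where "v = smult c ([:0,1:] ^ Suc n)"
    have Dv: "pcompose v [:1,1:] - v = smult c D"
      by (simp del: power_Suc add: v_def D_def pcompose_smult pcompose_power pcompose_X smult_diff_right)
    define g' where "g' = g - smult c D"
    have degD: "degree D \<le> n"
    proof (rule degree_le, intro allI impI)
      fix i assume "n < i"
      then show "coeff D i = 0" unfolding D_def by (subst coeffD) simp
    qed
    have dg': "degree g' \<le> degree g"
      unfolding g'_def using degD n_def
      by (metis degree_diff_le degree_smult_le le_trans order_refl)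
    have cDn: "coeff D n = of_nat (Suc n)"
      unfolding D_def by (subst coeffD) simp
    have cg': "coeff g' (degree g) = 0"
      unfolding g'_def coeff_diff coeff_smult n_def[symmetric] cDn c_def
      by (simp del: of_nat_Suc add: n_def)
    show ?thesis
    proof (cases "g' = 0")
      case True
      then show ?thesis using Dv g'_def by (intro exI[of _ v]) simp
    next
      case False
      then have "degree g' < degree g"
        using degree_less_if_less_eqI[OF dg' cg'] by simp
      then obtain u' where u': "pcompose u' [:1,1:] - u' = g'"
        using less by blast
      show ?thesis
      proof (intro exI[of _ "u' + v"])
        have "pcompose (u' + v) [:1,1:] - (u' + v) = (pcompose u' [:1,1:] - u') + (pcompose v [:1,1:] - v)"
          by (simp add: pcompose_add)
        also have "\<dots> = g" unfolding u' Dv g'_def by simp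
        finally show "pcompose (u' + v) [:1,1:] - (u' + v) = g" .
      qed
    qed
  qed
qed



lemma cst_m1: "cst (-1) = - 1"
  using cst_add[of 1 "-1"] by (simp add: cst_0 cst_1 eq_neg_iff_add_eq_0 add.commute)

definition Om :: "complex poly \<Rightarrow> rexpr" where
  "Om u = RAdd (RMul RF RE) (rpolyH u)"

definition Dx :: "complex poly \<Rightarrow> rexpr" where
  "Dx fp = rsub (rsub (RMul RE RF) (RMul RF RE)) (rpolyH fp)"

lemma abs_Om: "abs_ralg (Om u) = gF * gE + Hp u"
  by (simp add: Om_def abs_simps Hp_def)

lemma abs_Dx: "abs_ralg (Dx fp) = gE * gF - gF * gE - Hp fp"
  by (simp add: Dx_def abs_simps Hp_def)

lemma Dx_zero: "req fp (Dx fp) (RConst 0)"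
proof -
  have "req fp (Dx fp) (rsub (rpolyH fp) (rpolyH fp))"
    unfolding Dx_def rsub_def
    by (intro req.cong_add req.cong_mul req.refl) (rule req.rel_EF[unfolded rsub_def])
  moreover have "req fp (rsub (rpolyH fp) (rpolyH fp)) (RConst 0)"
    by (rule abs_eq_req) (simp add: abs_simps cst_0)
  ultimately show ?thesis by (rule req.trans)
qed

lemma u_back:
  assumes "pcompose u [:1,1:] - u = pcompose fp [:1,1:]"
  shows "u - pcompose u [:-1,1:] = (fp::complex poly)"
proof -
  have c: "pcompose [:1,1:] [:-1,1:] = ([:0,1:]::complex poly)"
    by (simp add: pcompose_pCons)
  have "pcompose (pcompose u [:1,1:] - u) [:-1,1:] = pcompose (pcompose fp [:1,1:]) [:-1,1:]"
    using assms by simp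
  then show ?thesis
    by (simp add: pcompose_diff pcompose_assoc[symmetric] c)
qed

lemma OmE_A:
  assumes "pcompose u [:1,1:] - u = pcompose fp [:1,1:]"
  shows "(gF * gE + Hp u) * gE = gE * (gF * gE + Hp u) + (- 1) * ((gE * gF - gF * gE - Hp fp) * gE)"
proof -
  have "Hp u * gE = gE * Hp (pcompose u [:1,1:])" by (rule Hp_shiftE)
  also have "\<dots> = gE * Hp u + gE * Hp (pcompose fp [:1,1:])"
  proof -
    have "pcompose u [:1,1:] = u + pcompose fp [:1,1:]"
      using assms by (simp add: algebra_simps)
    then show ?thesis by (simp add: Hp_add distrib_left)
  qed
  also have "gE * Hp (pcompose fp [:1,1:]) = Hp fp * gE" by (rule Hp_shiftE[symmetric])
  finally have "Hp u * gE = gE * Hp u + Hp fp * gE" .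
  then show ?thesis by (simp add: algebra_simps)
qed

lemma OmF_A:
  assumes "pcompose u [:1,1:] - u = pcompose fp [:1,1:]"
  shows "(gF * gE + Hp u) * gF = gF * (gF * gE + Hp u) + gF * (gE * gF - gF * gE - Hp fp)"
proof -
  have b: "u = pcompose u [:-1,1:] + fp" using u_back[OF assms] by (simp add: algebra_simps)
  have "Hp u * gF = gF * Hp (pcompose u [:-1,1:])" by (rule Hp_shiftF)
  also have "\<dots> = gF * Hp u - gF * Hp fp"
    by (subst (2) b) (simp add: Hp_add distrib_left)
  finally have "Hp u * gF = gF * Hp u - gF * Hp fp" .
  then show ?thesis by (simp add: algebra_simps)
qed

lemma OmH_A: "(gF * gE + Hp u) * gH = gH * (gF * gE + Hp u)"
proof -
  have "gH * (gF * gE) = gF * gE * gH"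
  proof -
    have "gH * (gF * gE) = (gH * gF) * gE" by (simp add: mult.assoc)
    also have "\<dots> = gF * (gH * gE) - gF * gE"
      by (simp add: HF algebra_simps)
    also have "\<dots> = gF * gE * gH"
      by (simp add: HE algebra_simps)
    finally show ?thesis .
  qed
  then show ?thesis by (simp add: distrib_left distrib_right Hp_H_comm)
qed

lemma Om_central:
  assumes "pcompose u [:1,1:] - u = pcompose fp [:1,1:]"
  shows "central fp (Om u)"
  unfolding central_def
proof
  fix x
  show "req fp (RMul (Om u) x) (RMul x (Om u))"
  proof (induction x)
    case RE
    let ?Y = "RMul (RConst (-1)) (RMul (Dx fp) RE)"
    let ?Z = "RMul (RConst (-1)) (RMul (RConst 0) RE)"
    have 1: "req fp (RMul (Om u) RE) (RAdd (RMul RE (Om u)) ?Y)"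
      by (rule abs_eq_req) (simp add: abs_simps abs_Om abs_Dx OmE_A[OF assms] cst_m1)
    have 2: "req fp (RAdd (RMul RE (Om u)) ?Y) (RAdd (RMul RE (Om u)) ?Z)"
      by (intro req.cong_add req.cong_mul req.refl Dx_zero)
    have 3: "req fp (RAdd (RMul RE (Om u)) ?Z) (RMul RE (Om u))"
      by (rule abs_eq_req) (simp add: abs_simps cst_0)
    show ?case by (rule req.trans[OF req.trans[OF 1 2] 3])
  next
    case RF
    let ?Y = "RMul RF (Dx fp)"
    let ?Z = "RMul RF (RConst 0)"
    have 1: "req fp (RMul (Om u) RF) (RAdd (RMul RF (Om u)) ?Y)"
      by (rule abs_eq_req) (simp add: abs_simps abs_Om abs_Dx OmF_A[OF assms])
    have 2: "req fp (RAdd (RMul RF (Om u)) ?Y) (RAdd (RMul RF (Om u)) ?Z)"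
      by (intro req.cong_add req.cong_mul req.refl Dx_zero)
    have 3: "req fp (RAdd (RMul RF (Om u)) ?Z) (RMul RF (Om u))"
      by (rule abs_eq_req) (simp add: abs_simps cst_0)
    show ?case by (rule req.trans[OF req.trans[OF 1 2] 3])
  next
    case RH
    show ?case
      by (rule abs_eq_req) (simp add: abs_simps abs_Om OmH_A)
  next
    case (RConst c)
    show ?case by (rule req.sym, rule req.const_comm)
  next
    case (RAdd x y)
    show ?case
      by (rule req.trans[OF req.distrib_l req.trans[OF req.cong_add[OF RAdd.IH] req.sym[OF req.distrib_r]]])
  next
    case (RMul x y)
    have a: "req fp (RMul (Om u) (RMul x y)) (RMul (RMul (Om u) x) y)"
      by (rule req.sym, rule req.mul_assoc)
    have b: "req fp (RMul (RMul (Om u) x) y) (RMul (RMul x (Om u)) y)"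
      by (intro req.cong_mul RMul.IH req.refl)
    have c: "req fp (RMul (RMul x (Om u)) y) (RMul x (RMul (Om u) y))"
      by (rule req.mul_assoc)
    have d: "req fp (RMul x (RMul (Om u) y)) (RMul x (RMul y (Om u)))"
      by (intro req.cong_mul RMul.IH req.refl)
    have e: "req fp (RMul x (RMul y (Om u))) (RMul (RMul x y) (Om u))"
      by (rule req.sym, rule req.mul_assoc)
    show ?case by (rule req.trans[OF req.trans[OF req.trans[OF req.trans[OF a b] c] d] e])
  qed
qed



locale rmod = vector_space s for s :: "complex \<Rightarrow> 'v \<Rightarrow> 'v::ab_group_add" +
  fixes fp :: "complex poly" and e f h :: "'v \<Rightarrow> 'v"
  assumes e_add: "e (x + y) = e x + e y" and e_scale: "e (s c x) = s c (e x)"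
    and f_add: "f (x + y) = f x + f y" and f_scale: "f (s c x) = s c (f x)"
    and h_add: "h (x + y) = h x + h y" and h_scale: "h (s c x) = s c (h x)"
    and relEF: "e (f v) - f (e v) = polyop s fp h v"
    and relHE: "h (e v) - e (h v) = e v"
    and relHF: "h (f v) - f (h v) = - f v"

lemma rmodule_rmod: "rmodule fp s e f h \<Longrightarrow> rmod s fp e f h"
  unfolding rmodule_def rmod_def rmod_axioms_def Vector_Spaces.linear_iff by auto

context rmod
begin

abbreviation act :: "rexpr \<Rightarrow> 'v \<Rightarrow> 'v" where
  "act \<equiv> ract s e f h"

lemma act_lin: "act x (v + w) = act x v + act x w \<and> act x (s c v) = s c (act x v)"
  by (induction x arbitrary: v w)
     (simp_all add: e_add e_scale f_add f_scale h_add h_scale scale_right_distrib scale_left_commute)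

lemma act_add: "act x (v + w) = act x v + act x w"
  using act_lin by blast
lemma act_scale: "act x (s c v) = s c (act x v)"
  using act_lin by blast

lemma act_rpow: "act (rpow RH i) v = (h ^^ i) v"
  by (induction i arbitrary: v) simp_all

lemma act_foldr:
  "act (foldr (\<lambda>i acc. RAdd (RMul (RConst (c i)) (rpow RH i)) acc) xs z) v
    = (\<Sum>i\<leftarrow>xs. s (c i) ((h ^^ i) v)) + act z v"
  by (induction xs) (simp_all add: act_rpow add.assoc)

lemma act_rpolyH: "act (rpolyH q) v = polyop s q h v"
proof -
  have "act (rpolyH q) v = (\<Sum>i\<leftarrow>[0..<Suc (degree q)]. s (coeff q i) ((h ^^ i) v))"
    unfolding rpolyH_def act_foldr by simp
  also have "\<dots> = polyop s q h v"
    unfolding polyop_def lessThan_Suc_atMost[symmetric]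
    by (simp only: sum_list_distinct_conv_sum_set distinct_upt set_upt atLeast0LessThan)
  finally show ?thesis .
qed

lemma act_req: "req fp x y \<Longrightarrow> act x v = act y v"
proof (induction arbitrary: v rule: req.induct)
  case (add_neg x)
  show ?case by (simp add: scale_minus_left[of 1, simplified])
next
  case (distrib_l x y z)
  show ?case by (simp add: act_add)
next
  case (const_add a b)
  show ?case by (simp add: scale_left_distrib)
next
  case (const_comm c x)
  show ?case by (simp add: act_scale)
next
  case rel_EF
  show ?case using relEF[of v] by (simp add: rsub_def act_rpolyH scale_minus_left[of 1, simplified])
next
  case rel_HE
  show ?case using relHE[of v] by (simp add: rsub_def scale_minus_left[of 1, simplified])
next
  case rel_HF
  show ?case using relHF[of v] by (simp add: rsub_def scale_minus_left[of 1, simplified])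
qed (simp_all add: add_ac)

lemma act_abs: "abs_ralg x = abs_ralg y \<Longrightarrow> act x v = act y v"
  by (rule act_req, rule abs_eq_req)

end



lemma mt: "pcompose [:-1,1:] [:1,1:] = ([:0,1:]::complex poly)"
  by (simp add: pcompose_pCons)
lemma tm: "pcompose [:1,1:] [:-1,1:] = ([:0,1:]::complex poly)"
  by (simp add: pcompose_pCons)

lemma comp_mt: "pcompose (pcompose p [:-1,1:]) [:1,1:] = (p::complex poly)"
  by (simp add: pcompose_assoc[symmetric] mt)
lemma comp_tm: "pcompose (pcompose p [:1,1:]) [:-1,1:] = (p::complex poly)"
  by (simp add: pcompose_assoc[symmetric] tm)

lemma periodic_const:
  fixes p :: "complex poly"
  assumes "p = pcompose p [:-1,1:]"
  shows "p = [:coeff p 0:]"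
proof -
  have step: "poly p x = poly p (x - 1)" for x
  proof -
    have "poly p x = poly (pcompose p [:-1,1:]) x" using assms by simp
    then show ?thesis by (simp add: poly_pcompose)
  qed
  have neg: "poly p (- of_nat k) = poly p 0" for k
  proof (induction k)
    case (Suc k)
    have e1: "(- of_nat (Suc k) :: complex) = (- of_nat (Suc k) + 1) - 1" by simp
    have "poly p (- of_nat (Suc k)) = poly p (- of_nat (Suc k) + 1)"
      by (subst e1, rule step[symmetric])
    also have "- of_nat (Suc k) + 1 = (- of_nat k :: complex)" by simp
    finally show ?case using Suc by simp
  qed simp
  define q where "q = p - [:poly p 0:]"
  have "range (\<lambda>k::nat. - of_nat k :: complex) \<subseteq> {x. poly q x = 0}"
    using neg by (auto simp: q_def)
  moreover have "infinite (range (\<lambda>k::nat. - of_nat k :: complex))"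
    by (rule range_inj_infinite) (simp add: inj_def)
  ultimately have "infinite {x. poly q x = 0}" using finite_subset by blast
  then have "q = 0" using poly_roots_finite by blast
  then show ?thesis by (simp add: q_def poly_0_coeff_0)
qed

lemma deg_diff_less:
  assumes "(p::complex poly) - pcompose p [:-1,1:] \<noteq> 0"
  shows "degree (p - pcompose p [:-1,1:]) < degree p"
proof -
  have dp: "degree p > 0"
  proof (rule ccontr)
    assume "\<not> degree p > 0"
    then have "degree p = 0" by simp
    then obtain c where "p = [:c:]" by (metis degree_eq_zeroE)
    then show False using assms by simp
  qed
  have d: "degree (pcompose p [:-1,1:]) = degree p"
    by (simp add: degree_pcompose)
  have l: "lead_coeff (pcompose p [:-1,1:]) = lead_coeff p"
    by (subst lead_coeff_comp) simp_all
  have "degree (p - pcompose p [:-1,1:]) \<le> degree p"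
    using degree_diff_le[of p "degree p" "pcompose p [:-1,1:]"] d by simp
  moreover have "coeff (p - pcompose p [:-1,1:]) (degree p) = 0"
    using l d by simp
  ultimately show ?thesis using degree_less_if_less_eqI assms by blast
qed

locale whit = rmod s fp e f h for s :: "complex \<Rightarrow> 'v \<Rightarrow> 'v::ab_group_add" and fp e f h +
  fixes a c :: complex and u :: "complex poly" and w :: 'v
  assumes a_nz: "a \<noteq> 0" and w_nz: "w \<noteq> 0" and wE: "e w = s a w"
    and uD: "pcompose u [:1,1:] - u = pcompose fp [:1,1:]"
    and cas: "act (Om u) v = s c v"
begin

definition P :: "complex poly \<Rightarrow> 'v" where
  "P p = act (rpolyH p) w"

lemma act_poly_mult: "act (rpolyH (p * q)) v = act (rpolyH p) (act (rpolyH q) v)"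
proof -
  have "act (rpolyH (p * q)) v = act (RMul (rpolyH p) (rpolyH q)) v"
    by (rule act_abs) (simp add: abs_simps Hp_def[symmetric] Hp_mult)
  then show ?thesis by simp
qed

lemma act_poly_add: "act (rpolyH (p + q)) v = act (rpolyH p) v + act (rpolyH q) v"
proof -
  have "act (rpolyH (p + q)) v = act (RAdd (rpolyH p) (rpolyH q)) v"
    by (rule act_abs) (simp add: abs_simps Hp_def[symmetric] Hp_add)
  then show ?thesis by simp
qed

lemma act_poly_smult: "act (rpolyH (smult k p)) v = s k (act (rpolyH p) v)"
proof -
  have "act (rpolyH (smult k p)) v = act (RMul (RConst k) (rpolyH p)) v"
    by (rule act_abs) (simp add: abs_simps Hp_def[symmetric] Hp_smult)
  then show ?thesis by simp
qed

lemma act_poly_const: "act (rpolyH [:k:]) v = s k v"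
proof -
  have "act (rpolyH [:k:]) v = act (RConst k) v"
    by (rule act_abs) (simp add: abs_simps Hp_def[symmetric] Hp_const)
  then show ?thesis by simp
qed

lemma P_add: "P (p + q) = P p + P q"
  by (simp add: P_def act_poly_add)
lemma P_smult: "P (smult k p) = s k (P p)"
  by (simp add: P_def act_poly_smult)
lemma P_const: "P [:k:] = s k w"
  by (simp add: P_def act_poly_const)
lemma P_diff: "P (p - q) = P p - P q"
  using P_add[of "p - q" q] by (simp add: algebra_simps)
lemma P_0: "P 0 = 0"
  using P_const[of 0] by simp
lemma P_1: "P 1 = w"
  using P_const[of 1] by (simp add: one_pCons)

lemma e_P: "e (P p) = P (smult a (pcompose p [:-1,1:]))"
proof -
  have "e (P p) = act (RMul RE (rpolyH p)) w" by (simp add: P_def)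
  also have "\<dots> = act (RMul (rpolyH (pcompose p [:-1,1:])) RE) w"
  proof (rule act_abs)
    have "Hp (pcompose p [:-1,1:]) * gE = gE * Hp p"
      using Hp_shiftE[of "pcompose p [:-1,1:]"] by (simp add: comp_mt)
    then show "abs_ralg (RMul RE (rpolyH p)) = abs_ralg (RMul (rpolyH (pcompose p [:-1,1:])) RE)"
      by (simp add: abs_simps Hp_def[symmetric])
  qed
  also have "\<dots> = P (smult a (pcompose p [:-1,1:]))"
    by (simp add: wE act_scale P_def act_poly_smult)
  finally show ?thesis .
qed

definition g :: "complex poly" where
  "g = smult (inverse a) ([:c:] - u)"

lemma f_w: "f w = P g"
proof -
  have "act (Om u) w = f (e w) + P u" by (simp add: Om_def P_def)
  then have "s a (f w) + P u = s c w" using cas[of w] by (simp add: wE f_scale)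
  then have "s a (f w) = P ([:c:] - u)" by (simp add: P_diff P_const algebra_simps)
  then have "s (inverse a) (s a (f w)) = P g"
    by (simp add: g_def P_smult)
  then show ?thesis using a_nz by simp
qed

lemma f_P: "f (P p) = P (pcompose p [:1,1:] * g)"
proof -
  have "f (P p) = act (RMul RF (rpolyH p)) w" by (simp add: P_def)
  also have "\<dots> = act (RMul (rpolyH (pcompose p [:1,1:])) RF) w"
  proof (rule act_abs)
    have "Hp (pcompose p [:1,1:]) * gF = gF * Hp p"
      using Hp_shiftF[of "pcompose p [:1,1:]"] by (simp add: comp_tm)
    then show "abs_ralg (RMul RF (rpolyH p)) = abs_ralg (RMul (rpolyH (pcompose p [:1,1:])) RF)"
      by (simp add: abs_simps Hp_def[symmetric])
  qed
  also have "\<dots> = P (pcompose p [:1,1:] * g)"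
    by (simp add: f_w P_def act_poly_mult)
  finally show ?thesis .
qed

lemma h_P: "h (P p) = P ([:0,1:] * p)"
proof -
  have "h (P p) = act (RMul RH (rpolyH p)) w" by (simp add: P_def)
  also have "\<dots> = act (rpolyH ([:0,1:] * p)) w"
    by (rule act_abs) (simp add: abs_simps Hp_def[symmetric] Hp_pCons cst_0)
  finally show ?thesis by (simp add: P_def)
qed

lemma P_surj:
  assumes irr: "\<forall>W. subspace W \<and> e ` W \<subseteq> W \<and> f ` W \<subseteq> W \<and> h ` W \<subseteq> W \<longrightarrow> W = {0} \<or> W = UNIV"
  shows "\<exists>p. v = P p"
proof -
  have sub: "subspace (range P)"
    unfolding subspace_def
  proof (intro conjI ballI allI)
    show "0 \<in> range P" using P_0 by (metis rangeI)
    fix x y assume "x \<in> range P" "y \<in> range P"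
    then obtain p q where "x = P p" "y = P q" by blast
    then have "x + y = P (p + q)" by (simp add: P_add)
    then show "x + y \<in> range P" by simp
  next
    fix k x assume "x \<in> range P"
    then obtain p where "x = P p" by blast
    then have "s k x = P (smult k p)" by (simp add: P_smult)
    then show "s k x \<in> range P" by simp
  qed
  have "e ` range P \<subseteq> range P" by (auto simp: e_P)
  moreover have "f ` range P \<subseteq> range P" by (auto simp: f_P)
  moreover have "h ` range P \<subseteq> range P" by (auto simp: h_P)
  ultimately have "range P = {0} \<or> range P = UNIV" using irr sub by blast
  moreover have "w \<in> range P" using P_1 by (metis rangeI)
  ultimately have "range P = UNIV" using w_nz by blast
  then show ?thesis by (metis UNIV_I image_iff)
qed

lemma P_inj0: "P p = 0 \<Longrightarrow> p = 0"
proof (induction "degree p" arbitrary: p rule: less_induct)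
  case less
  let ?q = "p - pcompose p [:-1,1:]"
  have "e (P p) = 0" using less.prems e_scale[of 0 0] by simp
  then have "s a (P (pcompose p [:-1,1:])) = 0" by (simp add: e_P P_smult)
  then have "P (pcompose p [:-1,1:]) = 0" using a_nz by simp
  then have Pq: "P ?q = 0" using less.prems by (simp add: P_diff)
  show "p = 0"
  proof (cases "?q = 0")
    case True
    then have "p = [:coeff p 0:]" using periodic_const[of p] by simp
    then have "s (coeff p 0) w = 0" using less.prems P_const by metis
    then have "coeff p 0 = 0" using w_nz by simp
    then show ?thesis using \<open>p = [:coeff p 0:]\<close> by simp
  next
    case False
    then have "degree ?q < degree p" by (rule deg_diff_less)
    then have "?q = 0" using less.hyps Pq by blast
    then show ?thesis using False by simp
  qed
qed

lemma P_inj: "P p = P q \<Longrightarrow> p = q"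
  using P_inj0[of "p - q"] by (simp add: P_diff)

lemma whit_unique:
  assumes irr: "\<forall>W. subspace W \<and> e ` W \<subseteq> W \<and> f ` W \<subseteq> W \<and> h ` W \<subseteq> W \<longrightarrow> W = {0} \<or> W = UNIV"
    and ev: "e v = s a v"
  shows "\<exists>k. v = s k w"
proof -
  obtain p where p: "v = P p" using P_surj[OF irr] by blast
  have "s a (P (pcompose p [:-1,1:])) = s a (P p)"
    using ev p by (simp add: e_P P_smult)
  then have "P (pcompose p [:-1,1:]) = P p" using a_nz by (metis scale_left_imp_eq)
  then have "pcompose p [:-1,1:] = p" by (rule P_inj)
  then have "p = [:coeff p 0:]" using periodic_const[of p] by simp
  then have "v = s (coeff p 0) w" using p P_const by metis
  then show ?thesis by blast
qed

lemma whit_pair: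
  assumes irr: "\<forall>W. subspace W \<and> e ` W \<subseteq> W \<and> f ` W \<subseteq> W \<and> h ` W \<subseteq> W \<longrightarrow> W = {0} \<or> W = UNIV"
    and ev: "e v = s a v" and nz: "v \<noteq> 0" and ev': "e v' = s a v'"
  shows "\<exists>k. v' = s k v"
proof -
  obtain k where k: "v = s k w" using whit_unique[OF irr ev] by blast
  obtain k' where k': "v' = s k' w" using whit_unique[OF irr ev'] by blast
  have "k \<noteq> 0" using nz k by auto
  then have "v' = s (k' / k) v" using k k' by simp
  then show ?thesis by blast
qed

end



theorem mainTheorem8:
  fixes fp :: "complex poly" and a :: complex
    and s1 :: "complex \<Rightarrow> 'v \<Rightarrow> 'v::ab_group_add" and e1 f1 h1 :: "'v \<Rightarrow> 'v"
    and s2 :: "complex \<Rightarrow> 'w \<Rightarrow> 'w::ab_group_add" and e2 f2 h2 :: "'w \<Rightarrow> 'w"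
  assumes "a \<noteq> 0"
    and "irreducible_rmodule fp s1 e1 f1 h1"
    and "irreducible_rmodule fp s2 e2 f2 h2"
    and "\<exists>\<xi>. center_char fp \<xi> \<and>
           (\<forall>z. central fp z \<longrightarrow>
              (\<forall>v. ract s1 e1 f1 h1 z v = s1 (\<xi> z) v) \<and>
              (\<forall>w. ract s2 e2 f2 h2 z w = s2 (\<xi> z) w))"
    and "\<exists>w. w \<noteq> 0 \<and> whittaker a s1 e1 w"
    and "\<exists>w. w \<noteq> 0 \<and> whittaker a s2 e2 w"
  shows "(\<forall>w w'. whittaker a s1 e1 w \<and> w \<noteq> 0 \<and> whittaker a s1 e1 w' \<longrightarrow> (\<exists>c. w' = s1 c w))
       \<and> (\<forall>w w'. whittaker a s2 e2 w \<and> w \<noteq> 0 \<and> whittaker a s2 e2 w' \<longrightarrow> (\<exists>c. w' = s2 c w))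
       \<and> (\<exists>\<phi>. rmodule_iso s1 e1 f1 h1 s2 e2 f2 h2 \<phi>)"
proof -
  obtain u where uD: "pcompose u [:1,1:] - u = pcompose fp [:1,1:]"
    using diff_exists by blast
  have cen: "central fp (Om u)" by (rule Om_central[OF uD])
  obtain \<xi> where xi: "\<forall>z. central fp z \<longrightarrow>
              (\<forall>v. ract s1 e1 f1 h1 z v = s1 (\<xi> z) v) \<and>
              (\<forall>w. ract s2 e2 f2 h2 z w = s2 (\<xi> z) w)"
    using assms(4) by blast
  define c where "c = \<xi> (Om u)"
  have cas1: "\<And>v. ract s1 e1 f1 h1 (Om u) v = s1 c v" using xi cen c_def by blast
  have cas2: "\<And>v. ract s2 e2 f2 h2 (Om u) v = s2 c v" using xi cen c_def by blast
  obtain w1 where w1: "w1 \<noteq> 0" "e1 w1 = s1 a w1" using assms(5) unfolding whittaker_def by blast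
  obtain w2 where w2: "w2 \<noteq> 0" "e2 w2 = s2 a w2" using assms(6) unfolding whittaker_def by blast
  have rm1: "rmodule fp s1 e1 f1 h1" and irr1: "\<forall>W. module.subspace s1 W \<and> e1 ` W \<subseteq> W \<and> f1 ` W \<subseteq> W \<and> h1 ` W \<subseteq> W
          \<longrightarrow> W = {0} \<or> W = UNIV"
    using assms(2) unfolding irreducible_rmodule_def by blast+
  have rm2: "rmodule fp s2 e2 f2 h2" and irr2: "\<forall>W. module.subspace s2 W \<and> e2 ` W \<subseteq> W \<and> f2 ` W \<subseteq> W \<and> h2 ` W \<subseteq> W
          \<longrightarrow> W = {0} \<or> W = UNIV"
    using assms(3) unfolding irreducible_rmodule_def by blast+
  interpret M1: rmod s1 fp e1 f1 h1 by (rule rmodule_rmod[OF rm1])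
  interpret M2: rmod s2 fp e2 f2 h2 by (rule rmodule_rmod[OF rm2])
  interpret W1: whit s1 fp e1 f1 h1 a c u w1
    by unfold_locales (use assms(1) w1 uD cas1 in auto)
  interpret W2: whit s2 fp e2 f2 h2 a c u w2
    by unfold_locales (use assms(1) w2 uD cas2 in auto)
  have part1: "\<forall>w w'. whittaker a s1 e1 w \<and> w \<noteq> 0 \<and> whittaker a s1 e1 w' \<longrightarrow> (\<exists>c. w' = s1 c w)"
    unfolding whittaker_def using W1.whit_pair[OF irr1] by blast
  have part2: "\<forall>w w'. whittaker a s2 e2 w \<and> w \<noteq> 0 \<and> whittaker a s2 e2 w' \<longrightarrow> (\<exists>c. w' = s2 c w)"
    unfolding whittaker_def using W2.whit_pair[OF irr2] by blast
  have surj1: "surj W1.P" using W1.P_surj[OF irr1] by (metis surjI)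
  have inj1: "inj W1.P" using W1.P_inj by (meson injI)
  have surj2: "surj W2.P" using W2.P_surj[OF irr2] by (metis surjI)
  have inj2: "inj W2.P" using W2.P_inj by (meson injI)
  define \<phi> where "\<phi> = (\<lambda>v. W2.P (inv W1.P v))"
  have phiP: "\<phi> (W1.P p) = W2.P p" for p
    unfolding \<phi>_def using inv_f_f[OF inj1] by simp
  have allP: "\<And>v. \<exists>p. v = W1.P p" using W1.P_surj[OF irr1] by blast
  have lin: "Vector_Spaces.linear s1 s2 \<phi>"
    unfolding Vector_Spaces.linear_iff
  proof (intro conjI allI)
    show "vector_space s1" by (rule M1.vector_space_axioms)
    show "vector_space s2" by (rule M2.vector_space_axioms)
    fix x y
    obtain p q where "x = W1.P p" "y = W1.P q" using allP by metis
    then show "\<phi> (x + y) = \<phi> x + \<phi> y"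
      by (metis W1.P_add W2.P_add phiP)
  next
    fix k x
    obtain p where "x = W1.P p" using allP by metis
    then show "\<phi> (s1 k x) = s2 k (\<phi> x)"
      by (metis W1.P_smult W2.P_smult phiP)
  qed
  have bij: "bij \<phi>"
  proof (rule bijI)
    show "inj \<phi>"
    proof (rule injI)
      fix x y assume "\<phi> x = \<phi> y"
      moreover obtain p q where "x = W1.P p" "y = W1.P q" using allP by metis
      ultimately show "x = y" using phiP W2.P_inj by metis
    qed
    show "surj \<phi>"
      unfolding surj_def
    proof
      fix z
      obtain p where "z = W2.P p" using W2.P_surj[OF irr2] by blast
      then show "\<exists>x. z = \<phi> x" using phiP by metis
    qed
  qed
  have inter: "\<forall>v. \<phi> (e1 v) = e2 (\<phi> v) \<and> \<phi> (f1 v) = f2 (\<phi> v) \<and> \<phi> (h1 v) = h2 (\<phi> v)"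
  proof
    fix v
    obtain p where p: "v = W1.P p" using allP by metis
    show "\<phi> (e1 v) = e2 (\<phi> v) \<and> \<phi> (f1 v) = f2 (\<phi> v) \<and> \<phi> (h1 v) = h2 (\<phi> v)"
      unfolding p
      by (simp add: phiP W1.e_P W2.e_P W1.f_P W2.f_P W1.h_P W2.h_P W1.g_def W2.g_def)
  qed
  have "rmodule_iso s1 e1 f1 h1 s2 e2 f2 h2 \<phi>"
    unfolding rmodule_iso_def using lin bij inter by blast
  then show ?thesis using part1 part2 by blast
qed


end
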